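(* Let $\sigma=\mathrm{diag}(\lambda_1,\dots,\lambda_d)$ be a quantum state with $\lambda_1\ge\lambda_2\ge\dots\ge\lambda_d$ and $\lambda_1\ge 1/2$, and let $0<\epsilon<\frac{1}{2\sqrt2}$. Then there is an absolute constant $c>0$ such that any algorithm that $\epsilon$-certifies $\sigma$ must use at least $c/\epsilon^2$ copies of the unknown state.
   Context: Task ($\epsilon$-certification of $\sigma$): a density matrix $\sigma$ is given by explicit description; the algorithm receives $n$ copies of an unknown density matrix $\rho$, promised that either $\rho=\sigma$ or $\|\rho-\sigma\|_1\ge\epsilon$ (trace norm), and must decide which holds with probability at least $2/3$ using arbitrary measurements, possibly entangled across all copies. *)

theory Defs
  imports "Jordan_Normal_Form.Schur_Decomposition" "HOL-Computational_Algebra.Polynomial"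
begin

definition kron :: "complex mat \<Rightarrow> complex mat \<Rightarrow> complex mat" where
  "kron A B = mat (dim_row A * dim_row B) (dim_col A * dim_col B)
     (\<lambda>(i, j). A $$ (i div dim_row B, j div dim_col B) * B $$ (i mod dim_row B, j mod dim_col B))"

fun tensor_pow :: "nat \<Rightarrow> complex mat \<Rightarrow> complex mat" where
  "tensor_pow 0 A = 1\<^sub>m 1"
| "tensor_pow (Suc n) A = kron A (tensor_pow n A)"

definition mtrace :: "complex mat \<Rightarrow> complex" where
  "mtrace A = (\<Sum>i<dim_row A. A $$ (i, i))"

definition hermitian :: "complex mat \<Rightarrow> bool" where
  "hermitian A \<longleftrightarrow> A \<in> carrier_mat (dim_row A) (dim_row A) \<and> mat_adjoint A = A"

definition psd :: "complex mat \<Rightarrow> bool" where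
  "psd A \<longleftrightarrow> hermitian A \<and>
     (\<forall>v \<in> carrier_vec (dim_row A). 0 \<le> Re (conjugate v \<bullet> (A *\<^sub>v v)))"

definition density_matrix :: "nat \<Rightarrow> complex mat \<Rightarrow> bool" where
  "density_matrix d \<rho> \<longleftrightarrow> \<rho> \<in> carrier_mat d d \<and> psd \<rho> \<and> mtrace \<rho> = 1"

text \<open>Trace norm = sum of singular values, i.e. of the square roots of the
  eigenvalues (with multiplicity) of A^* A.\<close>
definition trace_norm :: "complex mat \<Rightarrow> real" where
  "trace_norm A = (\<Sum>z \<in># proots (char_poly (mat_adjoint A * A)). sqrt (Re z))"

text \<open>A two-outcome measurement (POVM {M, I - M}) on D-dimensional space; outcome M = "accept: rho = sigma".\<close>
definition two_outcome_povm :: "nat \<Rightarrow> complex mat \<Rightarrow> bool" where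
  "two_outcome_povm D M \<longleftrightarrow> M \<in> carrier_mat D D \<and> psd M \<and> psd (1\<^sub>m D - M)"

definition accept_prob :: "complex mat \<Rightarrow> nat \<Rightarrow> complex mat \<Rightarrow> real" where
  "accept_prob M n \<rho> = Re (mtrace (M * tensor_pow n \<rho>))"

definition certifies :: "nat \<Rightarrow> complex mat \<Rightarrow> real \<Rightarrow> nat \<Rightarrow> complex mat \<Rightarrow> bool" where
  "certifies d \<sigma> \<epsilon> n M \<longleftrightarrow> two_outcome_povm (d ^ n) M \<and>
     accept_prob M n \<sigma> \<ge> 2/3 \<and>
     (\<forall>\<rho>. density_matrix d \<rho> \<and> trace_norm (\<rho> - \<sigma>) \<ge> \<epsilon> \<longrightarrow> accept_prob M n \<rho> \<le> 1/3)"

definition diag_state :: "nat \<Rightarrow> (nat \<Rightarrow> real) \<Rightarrow> complex mat" where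
  "diag_state d l = mat d d (\<lambda>(i, j). if i = j then complex_of_real (l i) else 0)"

end

theory Submission
  imports Defs
begin


lemma adj_entry: "mat_adjoint A = mat (dim_col A) (dim_row A) (\<lambda>(i,j). conjugate (A $$ (j,i)))"
  unfolding mat_adjoint_def by (rule eq_matI) (auto simp: mat_of_rows_def)

lemma adj_carrier[simp]: "dim_row (mat_adjoint A) = dim_col A" "dim_col (mat_adjoint A) = dim_row A"
  by (simp_all add: adj_entry)

lemma adj_idx: "i < dim_col A \<Longrightarrow> j < dim_row A \<Longrightarrow> mat_adjoint A $$ (i,j) = conjugate (A $$ (j,i))"
  by (simp add: adj_entry)

lemma sum_divmod: "(\<Sum>m<(a::nat)*(b::nat). f (m div b) (m mod b)) = (\<Sum>i<a. \<Sum>j<b. (f i j :: 'a::comm_monoid_add))"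
proof (cases "b = 0")
  case True then show ?thesis by simp
next
  case False
  have sub: "(\<lambda>(i, j). i * b + j) ` ({..<a} \<times> {..<b}) \<subseteq> {..<a * b}"
  proof
    fix x assume "x \<in> (\<lambda>(i, j). i * b + j) ` ({..<a} \<times> {..<b})"
    then obtain i j where x: "x = i*b+j" "i<a" "j<b" by auto
    have "i*b+j < i*b+b" using x by simp
    also have "\<dots> = (i+1)*b" by simp
    also have "\<dots> \<le> a*b" using x by (intro mult_right_mono) auto
    finally show "x \<in> {..<a*b}" using x by simp
  qed
  have bij: "bij_betw (\<lambda>m. (m div b, m mod b)) {..<a*b} ({..<a} \<times> {..<b})"
    by (rule bij_betw_byWitness[where f' = "\<lambda>(i,j). i*b+j", OF _ _ _ sub])
      (use False in \<open>auto simp: less_mult_imp_div_less\<close>)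
  have "(\<Sum>m<a*b. f (m div b) (m mod b)) = (\<Sum>(i,j)\<in>{..<a} \<times> {..<b}. f i j)"
    using sum.reindex_bij_betw[OF bij, of "\<lambda>(i,j). f i j"] by simp
  also have "\<dots> = (\<Sum>i<a. \<Sum>j<b. f i j)" by (simp add: sum.cartesian_product)
  finally show ?thesis .
qed

lemma sum_divmod2: "(\<Sum>i<(a::nat)*(p::nat). \<Sum>j<(b::nat)*(q::nat). h (i div p) (i mod p) (j div q) (j mod q)) =
  (\<Sum>i1<a. \<Sum>i2<p. \<Sum>j1<b. \<Sum>j2<q. (h i1 i2 j1 j2 :: 'a::comm_monoid_add))"
proof -
  have "(\<Sum>i<a*p. \<Sum>j<b*q. h (i div p) (i mod p) (j div q) (j mod q)) = (\<Sum>i<a*p. \<Sum>j1<b. \<Sum>j2<q. h (i div p) (i mod p) j1 j2)"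
    by (rule sum.cong[OF refl]) (rule sum_divmod)
  also have "\<dots> = (\<Sum>i1<a. \<Sum>i2<p. \<Sum>j1<b. \<Sum>j2<q. h i1 i2 j1 j2)"
    by (rule sum_divmod[of "\<lambda>i1 i2. \<Sum>j1<b. \<Sum>j2<q. h i1 i2 j1 j2"])
  finally show ?thesis .
qed

lemma kron_dims[simp]: "dim_row (kron A B) = dim_row A * dim_row B" "dim_col (kron A B) = dim_col A * dim_col B"
  by (simp_all add: kron_def)

lemma kron_idx: "i < dim_row A * dim_row B \<Longrightarrow> j < dim_col A * dim_col B \<Longrightarrow>
   kron A B $$ (i,j) = A $$ (i div dim_row B, j div dim_col B) * B $$ (i mod dim_row B, j mod dim_col B)"
  by (simp add: kron_def)

lemma div_lt: "(i::nat) < a * p \<Longrightarrow> i div p < a"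
  by (simp add: less_mult_imp_div_less)
lemma mod_lt: "(i::nat) < a * p \<Longrightarrow> i mod p < p"
  by (metis mod_less_divisor mult_0_right neq0_conv not_less0)

lemma kron_mult:
  assumes A: "A \<in> carrier_mat a b" and C: "C \<in> carrier_mat b c"
    and B: "B \<in> carrier_mat p q" and D: "D \<in> carrier_mat q r"
  shows "kron (A*C) (B*D) = kron A B * kron C D"
proof (rule eq_matI)
  show "dim_row (kron (A * C) (B * D)) = dim_row (kron A B * kron C D)"
       "dim_col (kron (A * C) (B * D)) = dim_col (kron A B * kron C D)" using A B C D by auto
  fix i j assume i: "i < dim_row (kron A B * kron C D)" and j: "j < dim_col (kron A B * kron C D)"
  have i': "i < a*p" and j': "j < c*r" using i j A B C D by auto
  have "kron (A * C) (B * D) $$ (i,j) = (A*C) $$ (i div p, j div r) * (B*D) $$ (i mod p, j mod r)"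
    using A B C D i' j' by (simp add: kron_idx)
  also have "\<dots> = (\<Sum>k<b. A $$ (i div p, k) * C $$ (k, j div r)) * (\<Sum>l<q. B $$ (i mod p, l) * D $$ (l, j mod r))"
    using A B C D i' j' div_lt[OF i'] div_lt[OF j'] mod_lt[OF i'] mod_lt[OF j']
    by (simp add: scalar_prod_def times_mat_def lessThan_atLeast0)
  also have "\<dots> = (\<Sum>k<b. \<Sum>l<q. (A $$ (i div p, k) * B $$ (i mod p, l)) * (C $$ (k, j div r) * D $$ (l, j mod r)))"
    by (simp add: sum_product algebra_simps)
  also have "\<dots> = (\<Sum>m<b*q. (A $$ (i div p, m div q) * B $$ (i mod p, m mod q)) * (C $$ (m div q, j div r) * D $$ (m mod q, j mod r)))"
    by (rule sum_divmod[symmetric])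
  also have "\<dots> = (kron A B * kron C D) $$ (i,j)"
    using A B C D i' j' by (auto simp: scalar_prod_def times_mat_def lessThan_atLeast0 kron_idx div_lt mod_lt intro!: sum.cong)
  finally show "kron (A * C) (B * D) $$ (i,j) = (kron A B * kron C D) $$ (i,j)" .
qed

lemma kron_adj: "mat_adjoint (kron A B) = kron (mat_adjoint A) (mat_adjoint B)"
  by (rule eq_matI) (auto simp: adj_entry kron_idx div_lt mod_lt)

definition fi :: "complex mat \<Rightarrow> complex mat \<Rightarrow> complex" where
  "fi X Y = (\<Sum>i<dim_row X. \<Sum>j<dim_col X. conjugate (X $$ (i,j)) * Y $$ (i,j))"

lemma fi_kron:
  assumes A: "A \<in> carrier_mat a b" and C: "C \<in> carrier_mat a b"
    and B: "B \<in> carrier_mat p q" and D: "D \<in> carrier_mat p q"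
  shows "fi (kron A B) (kron C D) = fi A C * fi B D"
proof -
  have "fi (kron A B) (kron C D) = (\<Sum>i<a*p. \<Sum>j<b*q. conjugate (A $$ (i div p, j div q) * B $$ (i mod p, j mod q)) * (C $$ (i div p, j div q) * D $$ (i mod p, j mod q)))"
    unfolding fi_def using A B C D by (auto simp: kron_idx intro!: sum.cong)
  also have "\<dots> = (\<Sum>i1<a. \<Sum>i2<p. \<Sum>j1<b. \<Sum>j2<q. conjugate (A $$ (i1, j1) * B $$ (i2, j2)) * (C $$ (i1, j1) * D $$ (i2, j2)))"
    by (rule sum_divmod2[of "\<lambda>i1 i2 j1 j2. conjugate (A $$ (i1, j1) * B $$ (i2, j2)) * (C $$ (i1, j1) * D $$ (i2, j2))"])
  also have "\<dots> = (\<Sum>i1<a. \<Sum>j1<b. \<Sum>i2<p. \<Sum>j2<q. (conjugate (A $$ (i1, j1)) * C $$ (i1, j1)) * (conjugate (B $$ (i2, j2)) * D $$ (i2, j2)))"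
    by (rule sum.cong[OF refl], subst sum.swap) (simp add: algebra_simps)
  also have "\<dots> = (\<Sum>i1<a. \<Sum>j1<b. (conjugate (A $$ (i1, j1)) * C $$ (i1, j1)) * (\<Sum>i2<p. \<Sum>j2<q. conjugate (B $$ (i2, j2)) * D $$ (i2, j2)))"
    by (simp add: sum_distrib_left)
  also have "\<dots> = fi A C * fi B D"
    unfolding fi_def using A B by (simp add: sum_distrib_right)
  finally show ?thesis .
qed

lemma tp_carrier: "A \<in> carrier_mat d d \<Longrightarrow> tensor_pow n A \<in> carrier_mat (d^n) (d^n)"
  by (induction n) auto

lemma tp_mult: "A \<in> carrier_mat d d \<Longrightarrow> C \<in> carrier_mat d d \<Longrightarrow> tensor_pow n (A*C) = tensor_pow n A * tensor_pow n C"
proof (induction n)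
  case 0 then show ?case by simp
next
  case (Suc n)
  then show ?case using kron_mult[OF Suc.prems(1) Suc.prems(2) tp_carrier[OF Suc.prems(1)] tp_carrier[OF Suc.prems(2)]]
    by simp
qed

lemma tp_adj: "tensor_pow n (mat_adjoint A) = mat_adjoint (tensor_pow n A)"
proof (induction n)
  case 0 show ?case by (rule eq_matI) (auto simp: adj_entry)
next
  case (Suc n) then show ?case by (simp add: kron_adj)
qed

lemma tp_fi: "A \<in> carrier_mat d d \<Longrightarrow> C \<in> carrier_mat d d \<Longrightarrow> fi (tensor_pow n A) (tensor_pow n C) = fi A C ^ n"
proof (induction n)
  case 0 show ?case by (simp add: fi_def)
next
  case (Suc n)
  then show ?case using fi_kron[OF Suc.prems(1) Suc.prems(2) tp_carrier[OF Suc.prems(1)] tp_carrier[OF Suc.prems(2)]]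
    by simp
qed



definition Qf :: "complex mat \<Rightarrow> nat \<Rightarrow> (nat \<Rightarrow> complex) \<Rightarrow> real" where
  "Qf M D v = Re (\<Sum>i<D. \<Sum>k<D. cnj (v i) * M $$ (i,k) * v k)"

definition Nf :: "nat \<Rightarrow> (nat \<Rightarrow> complex) \<Rightarrow> real" where
  "Nf D v = (\<Sum>k<D. Re (cnj (v k) * v k))"

lemma psd_Qf: assumes "M \<in> carrier_mat D D" "psd M" shows "0 \<le> Qf M D v"
proof -
  have "vec D v \<in> carrier_vec (dim_row M)" using assms by simp
  then have "0 \<le> Re (conjugate (vec D v) \<bullet> (M *\<^sub>v vec D v))" using assms(2) unfolding psd_def by blast
  also have "conjugate (vec D v) \<bullet> (M *\<^sub>v vec D v) = (\<Sum>i<D. \<Sum>k<D. cnj (v i) * M $$ (i,k) * v k)"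
    using assms(1) by (auto simp: scalar_prod_def mult_mat_vec_def lessThan_atLeast0 sum_distrib_left mult.assoc intro!: sum.cong)
  finally show ?thesis unfolding Qf_def .
qed

lemma psd_Qf_le: assumes "M \<in> carrier_mat D D" "psd (1\<^sub>m D - M)" shows "Qf M D v \<le> Nf D v"
proof -
  have "vec D v \<in> carrier_vec (dim_row (1\<^sub>m D - M))" using assms by simp
  then have "0 \<le> Re (conjugate (vec D v) \<bullet> ((1\<^sub>m D - M) *\<^sub>v vec D v))" using assms(2) unfolding psd_def by blast
  also have "conjugate (vec D v) \<bullet> ((1\<^sub>m D - M) *\<^sub>v vec D v) = (\<Sum>i<D. \<Sum>k<D. cnj (v i) * ((if i = k then 1 else 0) - M $$ (i,k)) * v k)"
    using assms(1) by (auto simp: scalar_prod_def mult_mat_vec_def lessThan_atLeast0 sum_distrib_left mult.assoc intro!: sum.cong)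
  also have "\<dots> = (\<Sum>i<D. cnj (v i) * v i) - (\<Sum>i<D. \<Sum>k<D. cnj (v i) * M $$ (i,k) * v k)"
  proof -
    have "\<And>i k. cnj (v i) * ((if i = k then 1 else 0) - M $$ (i,k)) * v k = (if k = i then cnj (v i) * v i else 0) - cnj (v i) * M $$ (i,k) * v k"
      by (simp add: algebra_simps)
    then show ?thesis by (simp add: sum_subtractf sum.delta)
  qed
  finally show ?thesis unfolding Qf_def Nf_def by simp
qed

definition Cf :: "complex mat \<Rightarrow> nat \<Rightarrow> (nat \<Rightarrow> complex) \<Rightarrow> (nat \<Rightarrow> complex) \<Rightarrow> real" where
  "Cf M D a b = Re (\<Sum>i<D. \<Sum>k<D. cnj (a i) * M $$ (i,k) * b k + cnj (b i) * M $$ (i,k) * a k)"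

lemma Qf_lin: "Qf M D (\<lambda>k. complex_of_real \<alpha> * a k + complex_of_real \<beta> * b k) = \<alpha>^2 * Qf M D a + \<beta>^2 * Qf M D b + \<alpha> * \<beta> * Cf M D a b"
proof -
  have "\<And>i k. cnj (complex_of_real \<alpha> * a i + complex_of_real \<beta> * b i) * M $$ (i,k) * (complex_of_real \<alpha> * a k + complex_of_real \<beta> * b k)
     = complex_of_real (\<alpha>^2) * (cnj (a i) * M $$ (i,k) * a k) + complex_of_real (\<beta>^2) * (cnj (b i) * M $$ (i,k) * b k)
       + complex_of_real (\<alpha> * \<beta>) * (cnj (a i) * M $$ (i,k) * b k + cnj (b i) * M $$ (i,k) * a k)"
    by (simp add: algebra_simps power2_eq_square)
  then show ?thesis unfolding Qf_def Cf_def
    by (simp add: sum.distrib sum_distrib_left[symmetric])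
qed

lemma Qf_add_le: assumes "M \<in> carrier_mat D D" "psd M" "r > 0"
  shows "Qf M D (\<lambda>k. a k + b k) \<le> (1 + r) * Qf M D a + (1 + 1/r) * Qf M D b"
proof -
  have e1: "Qf M D (\<lambda>k. a k + b k) = Qf M D a + Qf M D b + Cf M D a b"
    using Qf_lin[of M D 1 a 1 b] by simp
  have "0 \<le> Qf M D (\<lambda>k. complex_of_real r * a k + complex_of_real (-1) * b k)" by (rule psd_Qf[OF assms(1,2)])
  also have "\<dots> = r^2 * Qf M D a + Qf M D b - r * Cf M D a b" using Qf_lin[of M D r a "-1" b] by simp
  finally have "r * Cf M D a b \<le> r * (r * Qf M D a + Qf M D b / r)" using assms(3) by (simp add: power2_eq_square algebra_simps)
  then have "Cf M D a b \<le> r * Qf M D a + Qf M D b / r" using assms(3) by simp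
  then show ?thesis using e1 by (simp add: algebra_simps)
qed

lemma tr_form: assumes M: "M \<in> carrier_mat D D" and X: "X \<in> carrier_mat D D"
  shows "Re (mtrace (M * (X * mat_adjoint X))) = (\<Sum>j<D. Qf M D (\<lambda>k. X $$ (k,j)))"
proof -
  have "mtrace (M * (X * mat_adjoint X)) = (\<Sum>i<D. \<Sum>k<D. M $$ (i,k) * (\<Sum>j<D. X $$ (k,j) * cnj (X $$ (i,j))))"
    unfolding mtrace_def using assms by (auto simp: times_mat_def scalar_prod_def adj_idx lessThan_atLeast0 intro!: sum.cong)
  also have "\<dots> = (\<Sum>i<D. \<Sum>k<D. \<Sum>j<D. cnj (X $$ (i,j)) * M $$ (i,k) * X $$ (k,j))"
    by (simp add: sum_distrib_left algebra_simps)
  also have "\<dots> = (\<Sum>i<D. \<Sum>j<D. \<Sum>k<D. cnj (X $$ (i,j)) * M $$ (i,k) * X $$ (k,j))"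
    by (rule sum.cong[OF refl], rule sum.swap)
  also have "\<dots> = (\<Sum>j<D. \<Sum>i<D. \<Sum>k<D. cnj (X $$ (i,j)) * M $$ (i,k) * X $$ (k,j))"
    by (rule sum.swap)
  finally show ?thesis unfolding Qf_def by (simp add: Re_sum)
qed

lemma re_diff_sq: "Re (cnj (x - y) * (x - y)) = Re (cnj x * x) + Re (cnj y * y) - 2 * Re (cnj x * y)"
  by (simp add: algebra_simps)

lemma main_bound:
  assumes M: "M \<in> carrier_mat D D" and p1: "psd M" and p2: "psd (1\<^sub>m D - M)"
    and X: "X \<in> carrier_mat D D" and Y: "Y \<in> carrier_mat D D" and r: "r > 0"
  shows "Re (mtrace (M * (X * mat_adjoint X))) \<le> (1 + r) * Re (mtrace (M * (Y * mat_adjoint Y)))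
     + (1 + 1/r) * (Re (fi X X) + Re (fi Y Y) - 2 * Re (fi X Y))"
proof -
  let ?e = "\<lambda>j k. X $$ (k,j) - Y $$ (k,j)"
  have "Re (mtrace (M * (X * mat_adjoint X))) = (\<Sum>j<D. Qf M D (\<lambda>k. Y $$ (k,j) + ?e j k))"
    using tr_form[OF M X] by simp
  also have "\<dots> \<le> (\<Sum>j<D. (1 + r) * Qf M D (\<lambda>k. Y $$ (k,j)) + (1 + 1/r) * Nf D (?e j))"
  proof (rule sum_mono)
    fix j
    have "Qf M D (\<lambda>k. Y $$ (k,j) + ?e j k) \<le> (1 + r) * Qf M D (\<lambda>k. Y $$ (k,j)) + (1 + 1/r) * Qf M D (?e j)"
      by (rule Qf_add_le[OF M p1 r])
    also have "\<dots> \<le> (1 + r) * Qf M D (\<lambda>k. Y $$ (k,j)) + (1 + 1/r) * Nf D (?e j)"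
      using psd_Qf_le[OF M p2, of "?e j"] r by (intro add_left_mono mult_left_mono) auto
    finally show "Qf M D (\<lambda>k. Y $$ (k,j) + ?e j k) \<le> (1 + r) * Qf M D (\<lambda>k. Y $$ (k,j)) + (1 + 1/r) * Nf D (?e j)" .
  qed
  also have "\<dots> = (1 + r) * Re (mtrace (M * (Y * mat_adjoint Y))) + (1 + 1/r) * (\<Sum>j<D. Nf D (?e j))"
    using tr_form[OF M Y] by (simp add: sum.distrib sum_distrib_left)
  also have "(\<Sum>j<D. Nf D (?e j)) = Re (fi X X) + Re (fi Y Y) - 2 * Re (fi X Y)"
  proof -
    have "(\<Sum>j<D. Nf D (?e j)) = (\<Sum>j<D. \<Sum>k<D. Re (cnj (X $$ (k,j)) * X $$ (k,j)) + Re (cnj (Y $$ (k,j)) * Y $$ (k,j)) - 2 * Re (cnj (X $$ (k,j)) * Y $$ (k,j)))"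
      unfolding Nf_def by (simp only: re_diff_sq)
    also have "\<dots> = (\<Sum>k<D. \<Sum>j<D. Re (cnj (X $$ (k,j)) * X $$ (k,j)) + Re (cnj (Y $$ (k,j)) * Y $$ (k,j)) - 2 * Re (cnj (X $$ (k,j)) * Y $$ (k,j)))"
      by (rule sum.swap)
    also have "\<dots> = Re (fi X X) + Re (fi Y Y) - 2 * Re (fi X Y)"
      unfolding fi_def using X Y by (simp add: Re_sum sum.distrib sum_subtractf sum_distrib_left)
    finally show ?thesis .
  qed
  finally show ?thesis .
qed



lemma proots_lin: "proots (\<Prod>a \<leftarrow> xs. [:- a, 1:]) = mset (xs :: complex list)"
proof (induction xs)
  case Nil then show ?case by simp
next
  case (Cons a xs)
  have nz: "(\<Prod>a \<leftarrow> xs. [:- a, 1:]) \<noteq> 0" by (auto simp: prod_list_zero_iff)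
  have e: "(\<Prod>a \<leftarrow> a # xs. [:- a, 1:]) = [:- a, 1:] * (\<Prod>a \<leftarrow> xs. [:- a, 1:])"
    by (simp only: list.map prod_list.Cons)
  have "proots (\<Prod>a \<leftarrow> a # xs. [:- a, 1:]) = proots [:- a, 1:] + proots (\<Prod>a \<leftarrow> xs. [:- a, 1:])"
    unfolding e using nz by (intro proots_mult) auto
  then show ?case using Cons by simp
qed

lemma tn_diag:
  fixes G :: "complex mat"
  assumes G: "G \<in> carrier_mat d d" and dg: "\<And>i j. i < d \<Longrightarrow> j < d \<Longrightarrow> i \<noteq> j \<Longrightarrow> G $$ (i,j) = 0"
  shows "(\<Sum>z \<in># proots (char_poly G). f z) = (\<Sum>i<d. f (G $$ (i,i)))"
proof -
  have ut: "upper_triangular G" using G dg unfolding upper_triangular_def by auto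
  have cp: "char_poly G = (\<Prod>a \<leftarrow> diag_mat G. [:- a, 1:])"
    by (rule char_poly_upper_triangular[OF G ut])
  have "proots (char_poly G) = mset (diag_mat G)"
    unfolding cp by (rule proots_lin)
  then have "(\<Sum>z \<in># proots (char_poly G). f z) = sum_list (map f (diag_mat G))"
    by (metis mset_map sum_mset_sum_list)
  also have "\<dots> = (\<Sum>i<d. f (G $$ (i,i)))"
    using G by (simp add: diag_mat_def o_def sum_list_sum_nth lessThan_atLeast0)
  finally show ?thesis .
qed

lemma herm_BBH: assumes B: "B \<in> carrier_mat d d" shows "hermitian (B * mat_adjoint B)"
  unfolding hermitian_def using B
  by (auto intro!: eq_matI sum.cong simp: adj_entry times_mat_def scalar_prod_def mult.commute)

lemma psd_BBH: assumes B: "B \<in> carrier_mat d d" shows "psd (B * mat_adjoint B)"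
  unfolding psd_def
proof (intro conjI ballI)
  show "hermitian (B * mat_adjoint B)" by (rule herm_BBH[OF B])
  fix v :: "complex vec" assume v: "v \<in> carrier_vec (dim_row (B * mat_adjoint B))"
  then have vd: "dim_vec v = d" using B by simp
  define w where "w l = (\<Sum>i<d. cnj (v $ i) * B $$ (i,l))" for l
  have "conjugate v \<bullet> (B * mat_adjoint B *\<^sub>v v) = (\<Sum>i<d. cnj (v $ i) * (\<Sum>k<d. (\<Sum>l<d. B $$ (i,l) * cnj (B $$ (k,l))) * v $ k))"
    using B vd by (auto simp: scalar_prod_def mult_mat_vec_def times_mat_def adj_entry lessThan_atLeast0 intro!: sum.cong)
  also have "\<dots> = (\<Sum>i<d. \<Sum>k<d. \<Sum>l<d. (cnj (v $ i) * B $$ (i,l)) * (cnj (B $$ (k,l)) * v $ k))"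
    by (simp add: sum_distrib_left sum_distrib_right algebra_simps)
  also have "\<dots> = (\<Sum>i<d. \<Sum>l<d. \<Sum>k<d. (cnj (v $ i) * B $$ (i,l)) * (cnj (B $$ (k,l)) * v $ k))"
    by (rule sum.cong[OF refl], rule sum.swap)
  also have "\<dots> = (\<Sum>l<d. \<Sum>i<d. \<Sum>k<d. (cnj (v $ i) * B $$ (i,l)) * (cnj (B $$ (k,l)) * v $ k))"
    by (rule sum.swap)
  also have "\<dots> = (\<Sum>l<d. w l * cnj (w l))"
  proof -
    have cw: "cnj (w l) = (\<Sum>k<d. cnj (B $$ (k,l)) * v $ k)" for l
      unfolding w_def by (simp add: mult.commute)
    show ?thesis unfolding cw unfolding w_def by (simp add: sum_product)
  qed
  finally have "Re (conjugate v \<bullet> (B * mat_adjoint B *\<^sub>v v)) = (\<Sum>l<d. Re (w l * cnj (w l)))" by (simp add: Re_sum)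
  also have "\<dots> \<ge> 0" by (intro sum_nonneg) (simp add: power2_eq_square[symmetric])
  finally show "0 \<le> Re (conjugate v \<bullet> (B * mat_adjoint B *\<^sub>v v))" .
qed

lemma tr_BBH: assumes B: "B \<in> carrier_mat d d" shows "mtrace (B * mat_adjoint B) = fi B B"
  unfolding mtrace_def fi_def using B
  by (auto intro!: sum.cong simp: adj_entry times_mat_def scalar_prod_def mult.commute lessThan_atLeast0)

lemma sum_split: "(d::nat) \<ge> 2 \<Longrightarrow> (\<Sum>i<d. f i) = f 0 + f (d-1) + (\<Sum>i\<in>{1..<d-1}. (f i :: 'a::comm_monoid_add))"
proof -
  assume d: "d \<ge> 2"
  have "{..<d} = insert 0 (insert (d-1) {1..<d-1})" using d by auto
  then show ?thesis using d by (simp add: add.assoc)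
qed

lemma sum_two: "(d::nat) \<ge> 2 \<Longrightarrow> (\<And>l. l < d \<Longrightarrow> l \<noteq> 0 \<Longrightarrow> l \<noteq> d-1 \<Longrightarrow> f l = 0) \<Longrightarrow> (\<Sum>l<d. f l) = f 0 + (f (d-1) :: 'a::comm_monoid_add)"
proof -
  assume d: "d \<ge> 2" and z: "\<And>l. l < d \<Longrightarrow> l \<noteq> 0 \<Longrightarrow> l \<noteq> d-1 \<Longrightarrow> f l = 0"
  have "sum f {1..<d-1} = 0" by (rule sum.neutral) (use z in auto)
  then show ?thesis using sum_split[OF d, of f] by simp
qed

lemma sum_one: "(i::nat) < d \<Longrightarrow> (\<And>l. l < d \<Longrightarrow> l \<noteq> i \<Longrightarrow> f l = 0) \<Longrightarrow> (\<Sum>l<d. f l) = (f i :: 'a::comm_monoid_add)"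
  by (subst sum.remove[of _ i]) (auto intro!: sum.neutral)



definition bf :: "nat \<Rightarrow> (nat \<Rightarrow> real) \<Rightarrow> real \<Rightarrow> real \<Rightarrow> real \<Rightarrow> real \<Rightarrow> nat \<Rightarrow> nat \<Rightarrow> real" where
  "bf d l c s a0 ak i j = (if i = 0 \<and> j = 0 then c*a0 else if i = 0 \<and> j = d-1 then -(s*ak)
     else if i = d-1 \<and> j = 0 then s*a0 else if i = d-1 \<and> j = d-1 then c*ak
     else if i = j then sqrt (l i) else 0)"

definition Bm :: "nat \<Rightarrow> (nat \<Rightarrow> real) \<Rightarrow> real \<Rightarrow> real \<Rightarrow> real \<Rightarrow> real \<Rightarrow> complex mat" where
  "Bm d l c s a0 ak = mat d d (\<lambda>(i,j). complex_of_real (bf d l c s a0 ak i j))"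

definition rf :: "nat \<Rightarrow> (nat \<Rightarrow> real) \<Rightarrow> real \<Rightarrow> real \<Rightarrow> real \<Rightarrow> real \<Rightarrow> nat \<Rightarrow> nat \<Rightarrow> real" where
  "rf d l c s a0 ak i j = (if i = 0 \<and> j = 0 then c^2*a0^2 + s^2*ak^2
     else if (i = 0 \<and> j = d-1) \<or> (i = d-1 \<and> j = 0) then c*s*(a0^2 - ak^2)
     else if i = d-1 \<and> j = d-1 then s^2*a0^2 + c^2*ak^2
     else if i = j then l i else 0)"

lemma Bm_carrier[simp]: "Bm d l c s a0 ak \<in> carrier_mat d d" by (simp add: Bm_def)

lemma bf_mid: "i \<noteq> 0 \<Longrightarrow> i \<noteq> d-1 \<Longrightarrow> bf d l c s a0 ak i j = (if i = j then sqrt (l i) else 0)"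
  "j \<noteq> 0 \<Longrightarrow> j \<noteq> d-1 \<Longrightarrow> bf d l c s a0 ak i j = (if i = j then sqrt (l i) else 0)"
  by (auto simp: bf_def)

lemma bfv: "d - Suc 0 \<noteq> 0 \<Longrightarrow> bf d l c s a0 ak 0 0 = c*a0"
  "d - Suc 0 \<noteq> 0 \<Longrightarrow> bf d l c s a0 ak 0 (d - Suc 0) = -(s*ak)"
  "d - Suc 0 \<noteq> 0 \<Longrightarrow> bf d l c s a0 ak (d - Suc 0) 0 = s*a0"
  "d - Suc 0 \<noteq> 0 \<Longrightarrow> bf d l c s a0 ak (d - Suc 0) (d - Suc 0) = c*ak"
  by (auto simp: bf_def)

lemma bf_sum:
  assumes d: "d \<ge> 2" and l: "\<forall>i<d. 0 \<le> l i" and i: "i < d" and j: "j < d"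
  shows "(\<Sum>m<d. bf d l c s a0 ak i m * bf d l c' s' b0 bk j m) =
    (if i = 0 \<and> j = 0 then c*c'*a0*b0 + s*s'*ak*bk
     else if i = 0 \<and> j = d-1 then c*s'*a0*b0 - s*c'*ak*bk
     else if i = d-1 \<and> j = 0 then s*c'*a0*b0 - c*s'*ak*bk
     else if i = d-1 \<and> j = d-1 then s*s'*a0*b0 + c*c'*ak*bk
     else if i = j then l i else 0)"
proof -
  have k0: "d - 1 \<noteq> 0" using d by simp
  show ?thesis
  proof (cases "i = 0 \<or> i = d-1")
    case True
    have "(\<Sum>m<d. bf d l c s a0 ak i m * bf d l c' s' b0 bk j m) =
        bf d l c s a0 ak i 0 * bf d l c' s' b0 bk j 0 + bf d l c s a0 ak i (d-1) * bf d l c' s' b0 bk j (d-1)"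
      by (rule sum_two[OF d]) (use True in \<open>auto simp: bf_def\<close>)
    moreover have "j \<noteq> 0 \<Longrightarrow> j \<noteq> d-1 \<Longrightarrow> bf d l c' s' b0 bk j 0 = 0 \<and> bf d l c' s' b0 bk j (d-1) = 0"
      using k0 by (simp add: bf_mid)
    ultimately show ?thesis using True k0
      by (cases "j = 0"; cases "j = d-1"; cases "i = 0") (simp_all add: bfv)
  next
    case False
    have "(\<Sum>m<d. bf d l c s a0 ak i m * bf d l c' s' b0 bk j m) = bf d l c s a0 ak i i * bf d l c' s' b0 bk j i"
      by (rule sum_one[OF i]) (use False in \<open>auto simp: bf_def\<close>)
    moreover have "bf d l c s a0 ak i i = sqrt (l i)" "bf d l c' s' b0 bk j i = (if j = i then sqrt (l i) else 0)"
      using False by (simp_all add: bf_mid)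
    ultimately show ?thesis using False k0 l i by (auto simp: bf_mid)
  qed
qed

lemma BBH:
  assumes d: "d \<ge> 2" and l: "\<forall>i<d. 0 \<le> l i"
  shows "Bm d l c s a0 ak * mat_adjoint (Bm d l c s a0 ak) = mat d d (\<lambda>(i,j). complex_of_real (rf d l c s a0 ak i j))"
proof (rule eq_matI)
  fix i j assume "i < dim_row (mat d d (\<lambda>(i,j). complex_of_real (rf d l c s a0 ak i j)))"
    "j < dim_col (mat d d (\<lambda>(i,j). complex_of_real (rf d l c s a0 ak i j)))"
  then have i: "i < d" and j: "j < d" by auto
  have "(Bm d l c s a0 ak * mat_adjoint (Bm d l c s a0 ak)) $$ (i,j) = complex_of_real (\<Sum>m<d. bf d l c s a0 ak i m * bf d l c s a0 ak j m)"
    using i j by (simp add: Bm_def times_mat_def scalar_prod_def adj_entry lessThan_atLeast0)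
  also have "\<dots> = complex_of_real (rf d l c s a0 ak i j)"
    using bf_sum[OF d l i j, of c s a0 ak c s a0 ak] by (simp add: rf_def power2_eq_square algebra_simps)
  finally show "(Bm d l c s a0 ak * mat_adjoint (Bm d l c s a0 ak)) $$ (i,j) = mat d d (\<lambda>(i,j). complex_of_real (rf d l c s a0 ak i j)) $$ (i,j)"
    using i j by simp
qed (auto simp: Bm_def)

lemma fi_Bm:
  assumes d: "d \<ge> 2" and l: "\<forall>i<d. 0 \<le> l i"
  shows "fi (Bm d l c s a0 ak) (Bm d l c' s' b0 bk) = complex_of_real (c*c'*a0*b0 + s*s'*ak*bk + s*s'*a0*b0 + c*c'*ak*bk + (\<Sum>i\<in>{1..<d-1}. l i))"
proof -
  have k0: "d - 1 \<noteq> 0" using d by simp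
  have "fi (Bm d l c s a0 ak) (Bm d l c' s' b0 bk) = complex_of_real (\<Sum>i<d. \<Sum>m<d. bf d l c s a0 ak i m * bf d l c' s' b0 bk i m)"
    by (simp add: fi_def Bm_def)
  also have "(\<Sum>i<d. \<Sum>m<d. bf d l c s a0 ak i m * bf d l c' s' b0 bk i m) = 
     (\<Sum>i<d. (if i = 0 then c*c'*a0*b0 + s*s'*ak*bk else if i = d-1 then s*s'*a0*b0 + c*c'*ak*bk else l i))"
    by (rule sum.cong[OF refl]) (use k0 in \<open>auto simp: bf_sum[OF d l]\<close>)
  also have "\<dots> = c*c'*a0*b0 + s*s'*ak*bk + s*s'*a0*b0 + c*c'*ak*bk + (\<Sum>i\<in>{1..<d-1}. l i)"
    by (subst sum_split[OF d]) (use k0 in auto)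
  finally show ?thesis .
qed



definition pf :: "nat \<Rightarrow> real \<Rightarrow> real \<Rightarrow> nat \<Rightarrow> nat \<Rightarrow> real" where
  "pf d x y i j = (if i = 0 \<and> j = 0 then x else if (i = 0 \<and> j = d-1) \<or> (i = d-1 \<and> j = 0) then y
     else if i = d-1 \<and> j = d-1 then -x else 0)"

lemma sigma_eq:
  assumes d: "d \<ge> 2" and l: "\<forall>i<d. 0 \<le> l i"
  shows "diag_state d l = Bm d l 1 0 (sqrt (l 0)) (sqrt (l (d-1))) * mat_adjoint (Bm d l 1 0 (sqrt (l 0)) (sqrt (l (d-1))))"
  unfolding BBH[OF d l] diag_state_def
  by (rule eq_matI) (use d l in \<open>auto simp: rf_def\<close>)

lemma rho_density:
  assumes d: "d \<ge> 2" and l: "\<forall>i<d. 0 \<le> l i" and sl: "(\<Sum>i<d. l i) = 1"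
    and a: "a0^2 + ak^2 = l 0 + l (d-1)" and cs: "c^2 + s^2 = 1"
  shows "density_matrix d (Bm d l c s a0 ak * mat_adjoint (Bm d l c s a0 ak))"
proof -
  have mid: "(\<Sum>i\<in>{1..<d-1}. l i) = 1 - l 0 - l (d-1)" using sum_split[OF d, of l] sl by simp
  have "mtrace (Bm d l c s a0 ak * mat_adjoint (Bm d l c s a0 ak)) = fi (Bm d l c s a0 ak) (Bm d l c s a0 ak)"
    by (rule tr_BBH[OF Bm_carrier])
  also have "\<dots> = complex_of_real (c*c*a0*a0 + s*s*ak*ak + s*s*a0*a0 + c*c*ak*ak + (\<Sum>i\<in>{1..<d-1}. l i))"
    by (rule fi_Bm[OF d l])
  also have "c*c*a0*a0 + s*s*ak*ak + s*s*a0*a0 + c*c*ak*ak = (c^2 + s^2) * (a0^2 + ak^2)"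
    by (simp add: power2_eq_square algebra_simps)
  also have "\<dots> = l 0 + l (d-1)" using a cs by simp
  finally have "mtrace (Bm d l c s a0 ak * mat_adjoint (Bm d l c s a0 ak)) = complex_of_real (l 0 + l (d-1) + (\<Sum>i\<in>{1..<d-1}. l i))" .
  then have "mtrace (Bm d l c s a0 ak * mat_adjoint (Bm d l c s a0 ak)) = 1" unfolding mid by simp
  moreover have "Bm d l c s a0 ak * mat_adjoint (Bm d l c s a0 ak) \<in> carrier_mat d d"
    using Bm_carrier[of d l c s a0 ak] unfolding carrier_mat_def by simp
  ultimately show ?thesis unfolding density_matrix_def using psd_BBH[of "Bm d l c s a0 ak" d] by simp
qed

lemma diff_eq:
  assumes d: "d \<ge> 2" and l: "\<forall>i<d. 0 \<le> l i"
    and a: "a0^2 + ak^2 = l 0 + l (d-1)" and cs: "c^2 + s^2 = 1"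
  shows "Bm d l c s a0 ak * mat_adjoint (Bm d l c s a0 ak) - diag_state d l
     = mat d d (\<lambda>(i,j). complex_of_real (pf d (c^2*a0^2 + s^2*ak^2 - l 0) (c*s*(a0^2 - ak^2)) i j))"
proof -
  have key: "s^2*a0^2 + c^2*ak^2 - l (d-1) = - (c^2*a0^2 + s^2*ak^2 - l 0)"
  proof -
    have "(c^2 + s^2) * (a0^2 + ak^2) = l 0 + l (d-1)" using a cs by simp
    then show ?thesis by (simp add: algebra_simps)
  qed
  have k0: "d - 1 \<noteq> 0" using d by simp
  show ?thesis
    unfolding BBH[OF d l] diag_state_def
    by (rule eq_matI) (use k0 arg_cong[OF key, of complex_of_real] in \<open>auto simp: rf_def pf_def\<close>)
qed

lemma G_eq:
  assumes d: "d \<ge> 2"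
  shows "mat_adjoint (mat d d (\<lambda>(i,j). complex_of_real (pf d x y i j))) * mat d d (\<lambda>(i,j). complex_of_real (pf d x y i j))
     = mat d d (\<lambda>(i,j). complex_of_real (if i = j \<and> (i = 0 \<or> i = d-1) then x^2 + y^2 else 0))"
proof (rule eq_matI)
  have k0: "d - 1 \<noteq> 0" using d by simp
  fix i j assume "i < dim_row (mat d d (\<lambda>(i,j). complex_of_real (if i = j \<and> (i = 0 \<or> i = d-1) then x^2 + y^2 else 0)))"
    "j < dim_col (mat d d (\<lambda>(i,j). complex_of_real (if i = j \<and> (i = 0 \<or> i = d-1) then x^2 + y^2 else 0)))"
  then have i: "i < d" and j: "j < d" by auto
  have "(mat_adjoint (mat d d (\<lambda>(i,j). complex_of_real (pf d x y i j))) * mat d d (\<lambda>(i,j). complex_of_real (pf d x y i j))) $$ (i,j)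
     = complex_of_real (\<Sum>m<d. pf d x y m i * pf d x y m j)"
    using i j by (simp add: times_mat_def scalar_prod_def adj_entry lessThan_atLeast0)
  also have "(\<Sum>m<d. pf d x y m i * pf d x y m j) = pf d x y 0 i * pf d x y 0 j + pf d x y (d-1) i * pf d x y (d-1) j"
    by (rule sum_two[OF d]) (auto simp: pf_def)
  also have "\<dots> = (if i = j \<and> (i = 0 \<or> i = d-1) then x^2 + y^2 else 0)"
    using k0 by (auto simp: pf_def power2_eq_square algebra_simps)
  finally show "(mat_adjoint (mat d d (\<lambda>(i,j). complex_of_real (pf d x y i j))) * mat d d (\<lambda>(i,j). complex_of_real (pf d x y i j))) $$ (i,j)
     = mat d d (\<lambda>(i,j). complex_of_real (if i = j \<and> (i = 0 \<or> i = d-1) then x^2 + y^2 else 0)) $$ (i,j)"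
    using i j by simp
qed auto

lemma tn_pf:
  assumes d: "d \<ge> 2"
  shows "trace_norm (mat d d (\<lambda>(i,j). complex_of_real (pf d x y i j))) = 2 * sqrt (x^2 + y^2)"
proof -
  have k0: "d - 1 \<noteq> 0" using d by simp
  have "trace_norm (mat d d (\<lambda>(i,j). complex_of_real (pf d x y i j)))
     = (\<Sum>i<d. sqrt (Re (mat d d (\<lambda>(i,j). complex_of_real (if i = j \<and> (i = 0 \<or> i = d-1) then x^2 + y^2 else 0)) $$ (i,i))))"
    unfolding trace_norm_def G_eq[OF d] by (rule tn_diag) auto
  also have "\<dots> = (\<Sum>i<d. if i = 0 \<or> i = d-1 then sqrt (x^2 + y^2) else 0)"
    by (rule sum.cong) auto
  also have "\<dots> = 2 * sqrt (x^2 + y^2)"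
    by (subst sum_two[OF d]) (use k0 in auto)
  finally show ?thesis .
qed



lemma final_step:
  assumes d: "d \<ge> 2" and l: "\<forall>i<d. 0 \<le> l i" and sl: "(\<Sum>i<d. l i) = 1"
    and cert: "certifies d (diag_state d l) \<epsilon> n M" and ep: "\<epsilon> > 0"
    and a: "a0^2 + ak^2 = l 0 + l (d-1)" and cs: "c^2 + s^2 = 1"
    and tn: "\<epsilon> \<le> 2 * sqrt ((c^2*a0^2 + s^2*ak^2 - l 0)^2 + (c*s*(a0^2 - ak^2))^2)"
    and t0: "0 \<le> c * (sqrt (l 0) * a0 + sqrt (l (d-1)) * ak) + (\<Sum>i\<in>{1..<d-1}. l i)"
    and t1: "1 - (c * (sqrt (l 0) * a0 + sqrt (l (d-1)) * ak) + (\<Sum>i\<in>{1..<d-1}. l i)) \<le> 4 * \<epsilon>^2"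
  shows "1 / (144 * \<epsilon>^2) \<le> real n"
proof -
  define t where "t = c * (sqrt (l 0) * a0 + sqrt (l (d-1)) * ak) + (\<Sum>i\<in>{1..<d-1}. l i)"
  define A where "A = Bm d l 1 0 (sqrt (l 0)) (sqrt (l (d-1)))"
  define B where "B = Bm d l c s a0 ak"
  have mid: "(\<Sum>i\<in>{1..<d-1}. l i) = 1 - l 0 - l (d-1)" using sum_split[OF d, of l] sl by simp
  have Ac: "A \<in> carrier_mat d d" and Bc: "B \<in> carrier_mat d d" unfolding A_def B_def by simp_all
  have sig: "diag_state d l = A * mat_adjoint A" unfolding A_def by (rule sigma_eq[OF d l])
  have rho: "density_matrix d (B * mat_adjoint B)" unfolding B_def by (rule rho_density[OF d l sl a cs])
  have tnr: "trace_norm (B * mat_adjoint B - diag_state d l) \<ge> \<epsilon>"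
    unfolding B_def diff_eq[OF d l a cs] tn_pf[OF d] using tn .
  have fAB: "fi A B = complex_of_real t"
    unfolding A_def B_def t_def fi_Bm[OF d l] by (simp add: algebra_simps)
  have fAA: "fi A A = 1"
  proof -
    have "fi A A = complex_of_real (l 0 + l (d-1) + (\<Sum>i\<in>{1..<d-1}. l i))"
      unfolding A_def fi_Bm[OF d l] using l d by simp
    then show ?thesis unfolding mid by simp
  qed
  have fBB: "fi B B = 1"
  proof -
    have "fi B B = complex_of_real (c*c*a0*a0 + s*s*ak*ak + s*s*a0*a0 + c*c*ak*ak + (\<Sum>i\<in>{1..<d-1}. l i))"
      unfolding B_def by (rule fi_Bm[OF d l])
    also have "c*c*a0*a0 + s*s*ak*ak + s*s*a0*a0 + c*c*ak*ak = (c^2 + s^2) * (a0^2 + ak^2)"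
      by (simp add: power2_eq_square algebra_simps)
    also have "\<dots> = l 0 + l (d-1)" using a cs by simp
    finally have "fi B B = complex_of_real (l 0 + l (d-1) + (\<Sum>i\<in>{1..<d-1}. l i))" .
    then show ?thesis unfolding mid by simp
  qed
  define X where "X = tensor_pow n A"
  define Y where "Y = tensor_pow n B"
  have Xc: "X \<in> carrier_mat (d^n) (d^n)" unfolding X_def by (rule tp_carrier[OF Ac])
  have Yc: "Y \<in> carrier_mat (d^n) (d^n)" unfolding Y_def by (rule tp_carrier[OF Bc])
  have adjA: "mat_adjoint A \<in> carrier_mat d d" and adjB: "mat_adjoint B \<in> carrier_mat d d"
    using Ac Bc unfolding carrier_mat_def by auto
  have tpA: "tensor_pow n (A * mat_adjoint A) = X * mat_adjoint X"
    unfolding X_def tp_mult[OF Ac adjA] tp_adj ..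
  have tpB: "tensor_pow n (B * mat_adjoint B) = Y * mat_adjoint Y"
    unfolding Y_def tp_mult[OF Bc adjB] tp_adj ..
  from cert have M: "M \<in> carrier_mat (d^n) (d^n)" and p1: "psd M" and p2: "psd (1\<^sub>m (d^n) - M)"
    and accS: "accept_prob M n (diag_state d l) \<ge> 2/3"
    and accR: "accept_prob M n (B * mat_adjoint B) \<le> 1/3"
    using rho tnr unfolding certifies_def two_outcome_povm_def by auto
  have fXX: "fi X X = 1" unfolding X_def tp_fi[OF Ac Ac] fAA by simp
  have fYY: "fi Y Y = 1" unfolding Y_def tp_fi[OF Bc Bc] fBB by simp
  have fXY: "Re (fi X Y) = t ^ n" unfolding X_def Y_def tp_fi[OF Ac Bc] fAB
    by (simp flip: of_real_power)
  have "Re (mtrace (M * (X * mat_adjoint X))) \<le> (1 + 1/2) * Re (mtrace (M * (Y * mat_adjoint Y)))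
     + (1 + 1/(1/2)) * (Re (fi X X) + Re (fi Y Y) - 2 * Re (fi X Y))"
    by (rule main_bound[OF M p1 p2 Xc Yc]) simp
  then have "2/3 \<le> 3/2 * (1/3) + 3 * (2 - 2 * t^n)"
    using accS accR unfolding accept_prob_def sig tpA tpB fXX fYY fXY by simp
  then have h1: "1/36 \<le> 1 - t^n" by simp
  have "1 + real n * (t - 1) \<le> (1 + (t - 1)) ^ n"
    by (rule Bernoulli_inequality) (use t0 t_def in simp)
  then have "1 - t^n \<le> real n * (1 - t)" by (simp add: algebra_simps)
  also have "\<dots> \<le> real n * (4 * \<epsilon>^2)" using t1 unfolding t_def[symmetric] by (intro mult_left_mono) auto
  finally have "1/36 \<le> real n * (4 * \<epsilon>^2)" using h1 by linarith
  then show ?thesis using ep by (simp add: field_simps)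
qed



lemma sqrt_diff_sq: assumes "0 < a" "0 \<le> b" shows "(sqrt a - sqrt b)^2 \<le> (a - b)^2 / a"
proof -
  define u where "u = sqrt a"
  define v where "v = sqrt b"
  have u: "u > 0" "u^2 = a" using assms unfolding u_def by auto
  have v: "v \<ge> 0" "v^2 = b" using assms unfolding v_def by auto
  have "(u - v)^2 * a = (u - v)^2 * u^2" using u by simp
  also have "\<dots> \<le> (u - v)^2 * (u + v)^2" using u v by (intro mult_left_mono power_mono) auto
  also have "\<dots> = (a - b)^2" using u v by (simp add: power2_eq_square algebra_simps)
  finally have "(u - v)^2 * a \<le> (a - b)^2" .
  then show ?thesis unfolding u_def[symmetric] v_def[symmetric] using assms by (simp add: pos_le_divide_eq)
qed

lemma caseA:
  assumes d: "d \<ge> 2" and l: "\<forall>i<d. 0 \<le> l i" and sl: "(\<Sum>i<d. l i) = 1"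
    and cert: "certifies d (diag_state d l) \<epsilon> n M" and ep: "\<epsilon> > 0" "\<epsilon> < 1 / (2 * sqrt 2)"
    and gap: "l 0 - l (d-1) \<ge> 1/4"
  shows "1 / (144 * \<epsilon>^2) \<le> real n"
proof -
  define D0 where "D0 = l 0 - l (d-1)"
  define s where "s = \<epsilon> / (2 * D0)"
  define c where "c = sqrt (1 - s^2)"
  have D0: "D0 \<ge> 1/4" using gap unfolding D0_def by simp
  have l0: "l 0 \<ge> 0" and lk: "l (d-1) \<ge> 0" using l d by auto
  have mid: "(\<Sum>i\<in>{1..<d-1}. l i) = 1 - l 0 - l (d-1)" using sum_split[OF d, of l] sl by simp
  have midnn: "(\<Sum>i\<in>{1..<d-1}. l i) \<ge> 0" using l by (intro sum_nonneg) auto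
  have s0: "s > 0" unfolding s_def using ep D0 by simp
  have "sqrt 2 > 1" by simp
  then have "1 / (2 * sqrt 2) < 1/2" by (simp add: field_simps)
  then have ep2: "\<epsilon> < 1/2" using ep by linarith
  have "s \<le> 2 * \<epsilon>" unfolding s_def using ep D0 by (simp add: field_simps)
  then have s1: "s < 1" using ep2 by simp
  have s4: "s^2 \<le> 4 * \<epsilon>^2"
  proof -
    have "s^2 \<le> (2*\<epsilon>)^2" using \<open>s \<le> 2 * \<epsilon>\<close> s0 by (intro power_mono) auto
    then show ?thesis by (simp add: power2_eq_square)
  qed
  have ss: "s^2 < 1" using s0 s1 by (simp add: power_less_one_iff abs_square_less_1)
  have c2: "c^2 = 1 - s^2" unfolding c_def using ss by (subst real_sqrt_pow2) auto
  have c0: "c \<ge> 0" unfolding c_def using ss by simp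
  have c1: "c \<le> 1" unfolding c_def using s0 by simp
  have cs: "c^2 + s^2 = 1" using c2 by simp
  have a: "(sqrt (l 0))^2 + (sqrt (l (d-1)))^2 = l 0 + l (d-1)" using l0 lk by simp
  have e: "(c^2*(sqrt (l 0))^2 + s^2*(sqrt (l (d-1)))^2 - l 0)^2 + (c*s*((sqrt (l 0))^2 - (sqrt (l (d-1)))^2))^2 = (s * D0)^2"
  proof -
    have "(c^2*(sqrt (l 0))^2 + s^2*(sqrt (l (d-1)))^2 - l 0)^2 + (c*s*((sqrt (l 0))^2 - (sqrt (l (d-1)))^2))^2
        = (c^2 * l 0 + s^2 * l (d-1) - l 0)^2 + (c*s*D0)^2" using l0 lk unfolding D0_def by simp
    also have "c^2 * l 0 + s^2 * l (d-1) - l 0 = - (s^2 * D0)" unfolding D0_def c2 by (simp add: algebra_simps)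
    also have "(- (s^2 * D0))^2 + (c*s*D0)^2 = (s*D0)^2 * (s^2 + c^2)" by (simp add: power2_eq_square algebra_simps)
    finally show ?thesis using cs by simp
  qed
  have tn: "\<epsilon> \<le> 2 * sqrt ((c^2*(sqrt (l 0))^2 + s^2*(sqrt (l (d-1)))^2 - l 0)^2 + (c*s*((sqrt (l 0))^2 - (sqrt (l (d-1)))^2))^2)"
    unfolding e using s0 D0 unfolding s_def by simp
  have tval: "c * (sqrt (l 0) * sqrt (l 0) + sqrt (l (d-1)) * sqrt (l (d-1))) + (\<Sum>i\<in>{1..<d-1}. l i) = c * (l 0 + l (d-1)) + (1 - l 0 - l (d-1))"
    using l0 lk mid by simp
  have t0: "0 \<le> c * (sqrt (l 0) * sqrt (l 0) + sqrt (l (d-1)) * sqrt (l (d-1))) + (\<Sum>i\<in>{1..<d-1}. l i)"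
    using c0 l0 lk midnn by simp
  have "1 - c \<le> s^2"
  proof -
    have "c^2 \<le> c" using c0 c1 by (simp add: power2_eq_square mult_left_le_one_le)
    then show ?thesis using c2 by simp
  qed
  have le1: "l 0 + l (d-1) \<le> 1" using mid midnn by simp
  have "1 - (c * (l 0 + l (d-1)) + (1 - l 0 - l (d-1))) = (1 - c) * (l 0 + l (d-1))" by (simp add: algebra_simps)
  also have "\<dots> \<le> (1 - c) * 1" using c1 le1 by (intro mult_left_mono) auto
  also have "\<dots> \<le> 4 * \<epsilon>^2" using \<open>1 - c \<le> s^2\<close> s4 by simp
  finally have t1: "1 - (c * (sqrt (l 0) * sqrt (l 0) + sqrt (l (d-1)) * sqrt (l (d-1))) + (\<Sum>i\<in>{1..<d-1}. l i)) \<le> 4 * \<epsilon>^2"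
    unfolding tval .
  show ?thesis by (rule final_step[OF d l sl cert ep(1) a cs tn t0 t1])
qed



lemma caseB:
  assumes d: "d \<ge> 2" and l: "\<forall>i<d. 0 \<le> l i" and sl: "(\<Sum>i<d. l i) = 1"
    and mono: "\<forall>i j. i \<le> j \<and> j < d \<longrightarrow> l j \<le> l i" and l0h: "l 0 \<ge> 1/2"
    and cert: "certifies d (diag_state d l) \<epsilon> n M" and ep: "\<epsilon> > 0" "\<epsilon> < 1 / (2 * sqrt 2)"
    and gap: "l 0 - l (d-1) < 1/4"
  shows "1 / (144 * \<epsilon>^2) \<le> real n"
proof -
  have mid: "(\<Sum>i\<in>{1..<d-1}. l i) = 1 - l 0 - l (d-1)" using sum_split[OF d, of l] sl by simp
  have d2: "d = 2"
  proof (rule ccontr)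
    assume "d \<noteq> 2"
    then have d3: "d \<ge> 3" using d by simp
    have "l 1 \<le> (\<Sum>i\<in>{1..<d-1}. l i)"
      by (rule member_le_sum) (use d3 l in auto)
    moreover have "l (d-1) \<le> l 1" using mono d3 by auto
    ultimately show False using mid gap l0h by linarith
  qed
  have k1: "d - 1 = 1" using d2 by simp
  have mid0: "(\<Sum>i\<in>{1..<d-1}. l i) = 0" using k1 by simp
  have l01: "l 0 + l (d-1) = 1" using mid mid0 by simp
  have "sqrt 2 > 1" by simp
  then have "1 / (2 * sqrt 2) < 1/2" by (simp add: field_simps)
  then have ep2: "\<epsilon> < 1/2" using ep by linarith
  define \<delta> where "\<delta> = \<epsilon> / 2"
  have dpos: "\<delta> > 0" "\<delta> < 1/4" using ep ep2 unfolding \<delta>_def by auto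
  have lk: "l (d-1) > 1/4" using gap l01 l0h by linarith
  have lk0: "l 0 > 0" using l0h by simp
  define a0 where "a0 = sqrt (l 0 + \<delta>)"
  define ak where "ak = sqrt (l (d-1) - \<delta>)"
  have a02: "a0^2 = l 0 + \<delta>" unfolding a0_def using lk0 dpos by simp
  have ak2: "ak^2 = l (d-1) - \<delta>" unfolding ak_def using lk dpos by simp
  have a0n: "a0 \<ge> 0" "ak \<ge> 0" unfolding a0_def ak_def using lk0 lk dpos by auto
  have a: "a0^2 + ak^2 = l 0 + l (d-1)" using a02 ak2 by simp
  have cs: "(1::real)^2 + 0^2 = 1" by simp
  have tn: "\<epsilon> \<le> 2 * sqrt ((1^2*a0^2 + 0^2*ak^2 - l 0)^2 + (1*0*(a0^2 - ak^2))^2)"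
    using a02 dpos unfolding \<delta>_def by simp
  have t0: "0 \<le> 1 * (sqrt (l 0) * a0 + sqrt (l (d-1)) * ak) + (\<Sum>i\<in>{1..<d-1}. l i)"
    using mid0 a0n lk0 lk by simp
  have e1: "(sqrt (l 0) - a0)^2 \<le> \<delta>^2 / l 0"
    using sqrt_diff_sq[of "l 0" "l 0 + \<delta>"] lk0 dpos unfolding a0_def by simp
  have e2: "(sqrt (l (d-1)) - ak)^2 \<le> \<delta>^2 / l (d-1)"
    using sqrt_diff_sq[of "l (d-1)" "l (d-1) - \<delta>"] lk dpos unfolding ak_def by simp
  have f1: "\<delta>^2 / l 0 \<le> 2 * \<delta>^2" using mult_left_mono[of 1 "2 * l 0" "\<delta>^2"] l0h lk0 by (simp add: field_simps)
  have f2: "\<delta>^2 / l (d-1) \<le> 4 * \<delta>^2" using mult_left_mono[of 1 "4 * l (d-1)" "\<delta>^2"] lk by (simp add: field_simps)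
  have "1 - (sqrt (l 0) * a0 + sqrt (l (d-1)) * ak) = ((sqrt (l 0) - a0)^2 + (sqrt (l (d-1)) - ak)^2) / 2"
  proof -
    have "(sqrt (l 0) - a0)^2 + (sqrt (l (d-1)) - ak)^2 = (sqrt (l 0))^2 + a0^2 + (sqrt (l (d-1)))^2 + ak^2 - 2 * (sqrt (l 0) * a0 + sqrt (l (d-1)) * ak)"
      by (simp add: power2_eq_square algebra_simps)
    also have "\<dots> = 2 - 2 * (sqrt (l 0) * a0 + sqrt (l (d-1)) * ak)"
      using a02 ak2 l01 lk0 lk by simp
    finally show ?thesis by simp
  qed
  also have "\<dots> \<le> 3 * \<delta>^2" using e1 e2 f1 f2 by simp
  also have "\<dots> \<le> 4 * \<epsilon>^2" unfolding \<delta>_def by (simp add: power2_eq_square)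
  finally have t1: "1 - (1 * (sqrt (l 0) * a0 + sqrt (l (d-1)) * ak) + (\<Sum>i\<in>{1..<d-1}. l i)) \<le> 4 * \<epsilon>^2"
    using mid0 by simp
  show ?thesis by (rule final_step[OF d l sl cert ep(1) a cs tn t0 t1])
qed

theorem lemma5p13:
  "\<exists>c > 0. \<forall>(d::nat) (l::nat \<Rightarrow> real) (\<epsilon>::real) (n::nat) (M::complex mat).
     d \<ge> 2 \<and>
     (\<forall>i<d. 0 \<le> l i) \<and> (\<Sum>i<d. l i) = 1 \<and>
     (\<forall>i j. i \<le> j \<and> j < d \<longrightarrow> l j \<le> l i) \<and> l 0 \<ge> 1/2 \<and>
     0 < \<epsilon> \<and> \<epsilon> < 1 / (2 * sqrt 2) \<and>
     certifies d (diag_state d l) \<epsilon> n M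
     \<longrightarrow> real n \<ge> c / \<epsilon>^2"
proof (intro exI[of _ "1/144"] conjI allI impI)
  show "(0::real) < 1/144" by simp
  fix d l \<epsilon> n M
  assume h: "2 \<le> d \<and> (\<forall>i<d. 0 \<le> l i) \<and> (\<Sum>i<d. l i) = 1 \<and>
     (\<forall>i j. i \<le> j \<and> j < d \<longrightarrow> l j \<le> l i) \<and> 1/2 \<le> l 0 \<and>
     0 < \<epsilon> \<and> \<epsilon> < 1 / (2 * sqrt 2) \<and> certifies d (diag_state d l) \<epsilon> n M"
  have "1 / (144 * \<epsilon>^2) \<le> real n"
  proof (cases "l 0 - l (d-1) \<ge> 1/4")
    case True then show ?thesis using caseA h by blast
  next
    case False then show ?thesis using caseB[of d l \<epsilon> n M] h by simp
  qed
  then show "1/144 / \<epsilon>^2 \<le> real n" by simp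
qed

end
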